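(* Every simple partially ordered abelian group of rank one $(G,G^+)$ is order-isomorphic to the direct limit of a directed system $(G_n,f_{n,n+1})_{n\ge 1}$ in which, for every $n\in\mathbb{N}$, $G_n=(\mathbb{Z},G_n^+)$ is a simple component and $f_{n,n+1}\colon G_n\to G_{n+1}$ is an order-embedding.
   Context: A partially ordered abelian group $(G,G^+)$ is an abelian group $G$ with a submonoid $G^+$ (containing $0$) such that $G^+\cap(-G^+)=\{0\}$; write $x\le_G y$ iff $y-x\in G^+$. An order-unit is $0\neq u\in G^+$ such that for every $x\in G$ there is $n\in\mathbb{N}$ with $-nu\le_G x\le_G nu$. $(G,G^+)$ is simple if $G\neq 0$ and every nonzero element of $G^+$ is an order-unit. $G$ has rank one if it is isomorphic (as an abelian group) to a nonzero subgroup of $\mathbb{Q}$. A simple component is a simple partially ordered abelian group of the form $(\mathbb{Z},P)$. A positive morphism $f\colon G\to H$ is a group homomorphism with $f(G^+)\subseteq H^+$; it is an order-embedding if it is injective and $f(G^+)=f(G)\cap H^+$. The direct limit of a directed system of partially ordered abelian groups with positive connecting maps is the group-theoretic direct limit with positive cone the union of the images of the positive cones. *)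

theory Defs
  imports Complex_Main
begin

definition po_group :: "'a::ab_group_add set \<Rightarrow> bool" where
  "po_group P \<longleftrightarrow> 0 \<in> P \<and> (\<forall>x\<in>P. \<forall>y\<in>P. x + y \<in> P) \<and> P \<inter> uminus ` P = {0}"

definition po_le :: "'a::ab_group_add set \<Rightarrow> 'a \<Rightarrow> 'a \<Rightarrow> bool" where
  "po_le P x y \<longleftrightarrow> y - x \<in> P"

definition nsmul :: "nat \<Rightarrow> 'a::ab_group_add \<Rightarrow> 'a" where
  "nsmul n u = (((+) u) ^^ n) 0"

definition order_unit :: "'a::ab_group_add set \<Rightarrow> 'a \<Rightarrow> bool" where
  "order_unit P u \<longleftrightarrow> u \<noteq> 0 \<and> u \<in> P \<and>
     (\<forall>x. \<exists>n::nat. po_le P (- nsmul n u) x \<and> po_le P x (nsmul n u))"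

definition simple_po_group :: "'a::ab_group_add set \<Rightarrow> bool" where
  "simple_po_group P \<longleftrightarrow> po_group P \<and> (UNIV :: 'a set) \<noteq> {0} \<and>
     (\<forall>x\<in>P. x \<noteq> 0 \<longrightarrow> order_unit P x)"

definition rank_one :: "'a::ab_group_add itself \<Rightarrow> bool" where
  "rank_one _ \<longleftrightarrow> (UNIV :: 'a set) \<noteq> {0} \<and>
     (\<exists>h :: 'a \<Rightarrow> rat. inj h \<and> (\<forall>x y. h (x + y) = h x + h y))"

definition simple_component :: "int set \<Rightarrow> bool" where
  "simple_component P \<longleftrightarrow> simple_po_group P"

definition group_hom :: "('a::ab_group_add \<Rightarrow> 'b::ab_group_add) \<Rightarrow> bool" where
  "group_hom f \<longleftrightarrow> (\<forall>x y. f (x + y) = f x + f y)"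

definition order_embedding ::
  "'a::ab_group_add set \<Rightarrow> 'b::ab_group_add set \<Rightarrow> ('a \<Rightarrow> 'b) \<Rightarrow> bool" where
  "order_embedding P Q f \<longleftrightarrow> group_hom f \<and> f ` P \<subseteq> Q \<and> inj f \<and> f ` P = range f \<inter> Q"

(* connecting map f_{n,n+d} = f_{n+d-1} o ... o f_n *)
fun trans_map :: "(nat \<Rightarrow> int \<Rightarrow> int) \<Rightarrow> nat \<Rightarrow> nat \<Rightarrow> int \<Rightarrow> int" where
  "trans_map f n 0 = id"
| "trans_map f n (Suc d) = f (n + d) \<circ> trans_map f n d"

definition dl_rel :: "(nat \<Rightarrow> int \<Rightarrow> int) \<Rightarrow> ((nat \<times> int) \<times> (nat \<times> int)) set" where
  "dl_rel f = {((n, x), (m, y)). \<exists>k. n \<le> k \<and> m \<le> k \<and>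
      trans_map f n (k - n) x = trans_map f m (k - m) y}"

definition dl_carrier :: "(nat \<Rightarrow> int \<Rightarrow> int) \<Rightarrow> (nat \<times> int) set set" where
  "dl_carrier f = UNIV // dl_rel f"

definition dl_add :: "(nat \<Rightarrow> int \<Rightarrow> int) \<Rightarrow> (nat \<times> int) set \<Rightarrow> (nat \<times> int) set \<Rightarrow> (nat \<times> int) set" where
  "dl_add f A B = {q. \<exists>n x m y k. (n, x) \<in> A \<and> (m, y) \<in> B \<and> n \<le> k \<and> m \<le> k \<and>
      q \<in> dl_rel f `` {(k, trans_map f n (k - n) x + trans_map f m (k - m) y)}}"

definition dl_pos :: "(nat \<Rightarrow> int \<Rightarrow> int) \<Rightarrow> (nat \<Rightarrow> int set) \<Rightarrow> (nat \<times> int) set set" where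
  "dl_pos f P = {A \<in> dl_carrier f. \<exists>n x. (n, x) \<in> A \<and> x \<in> P n}"

definition order_iso_to_dl ::
  "'a::ab_group_add set \<Rightarrow> (nat \<Rightarrow> int set) \<Rightarrow> (nat \<Rightarrow> int \<Rightarrow> int) \<Rightarrow> bool" where
  "order_iso_to_dl Pos P f \<longleftrightarrow> (\<exists>\<phi> :: 'a \<Rightarrow> (nat \<times> int) set.
      bij_betw \<phi> UNIV (dl_carrier f) \<and>
      (\<forall>a b. \<phi> (a + b) = dl_add f (\<phi> a) (\<phi> b)) \<and>
      \<phi> ` Pos = dl_pos f P)"

end

theory Submission
  imports Defs
begin

definition subgrp :: "rat set \<Rightarrow> bool" where
  "subgrp H \<longleftrightarrow> 0 \<in> H \<and> (\<forall>x\<in>H. \<forall>y\<in>H. x + y \<in> H) \<and> (\<forall>x\<in>H. -x \<in> H)"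

lemma subgrp_nat_mult: "subgrp H \<Longrightarrow> x \<in> H \<Longrightarrow> of_nat n * x \<in> H"
  by (induction n) (auto simp: subgrp_def distrib_right)

lemma subgrp_int_mult: assumes "subgrp H" "x \<in> H" shows "of_int m * x \<in> H"
proof (cases "m \<ge> 0")
  case True
  then have "m = int (nat m)" by simp
  then show ?thesis using subgrp_nat_mult[OF assms, of "nat m"] by (metis of_int_of_nat_eq)
next
  case False
  then have "m = - int (nat (-m))" by simp
  then have "of_int m * x = - (of_nat (nat (-m)) * x)" by (metis minus_mult_left of_int_minus of_int_of_nat_eq)
  then show ?thesis using subgrp_nat_mult[OF assms, of "nat (-m)"] assms(1) by (simp add: subgrp_def)
qed

lemma subgrp_recip:
  assumes H: "subgrp H" and one: "1 \<in> H" and x: "x \<in> H" and q: "quotient_of x = (p, q)"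
  shows "1 / of_int q \<in> H"
proof -
  have cop: "coprime p q" using quotient_of_coprime[OF q] .
  have qpos: "q > 0" using quotient_of_denom_pos[OF q] .
  obtain u v where uv: "u * p + v * q = gcd p q" using bezout_int by blast
  with cop have uv1: "u * p + v * q = 1" by simp
  have xe: "x = of_int p / of_int q" using quotient_of_div[OF q] .
  have "1 / (of_int q :: rat) = of_int u * x + of_int v * 1"
  proof -
    have "(of_int (u * p + v * q) :: rat) = 1" using uv1 by simp
    then have "(1::rat) = of_int u * of_int p + of_int v * of_int q" by simp
    then show ?thesis using qpos unfolding xe by (simp add: field_simps)
  qed
  moreover have "of_int u * x \<in> H" "of_int v * 1 \<in> H"
    using subgrp_int_mult[OF H x] subgrp_int_mult[OF H one] by auto
  ultimately show ?thesis using H by (simp add: subgrp_def)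
qed

lemma subgrp_lcm:
  assumes H: "subgrp H" and a: "a > 0" and b: "b > 0"
    and ha: "1 / of_int a \<in> H" and hb: "1 / of_int b \<in> H"
  shows "1 / of_int (lcm a b) \<in> H"
proof -
  obtain u v where uv: "u * a + v * b = gcd a b" using bezout_int by blast
  have pr: "a * b = gcd a b * lcm a b" using prod_gcd_lcm_int[of a b] a b by simp
  have lpos: "lcm a b > 0" using a b by (simp add: lcm_pos_int)
  have gpos: "gcd a b > 0" using a b by simp
  have "1 / (of_int (lcm a b) :: rat) = of_int u * (1 / of_int b) + of_int v * (1 / of_int a)"
  proof -
    have e1: "(of_int a * of_int b :: rat) = of_int (gcd a b) * of_int (lcm a b)"
      using pr by (metis of_int_mult)
    have e2: "(of_int u * of_int a + of_int v * of_int b :: rat) = of_int (gcd a b)"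
      using uv by (metis of_int_add of_int_mult)
    show ?thesis using a b lpos gpos e1 e2 by (simp add: field_simps)
  qed
  moreover have "of_int u * (1 / of_int b) \<in> H" "of_int v * (1 / of_int a) \<in> H"
    using subgrp_int_mult[OF H hb] subgrp_int_mult[OF H ha] by auto
  ultimately show ?thesis using H by (simp add: subgrp_def)
qed

fun dseq :: "rat set \<Rightarrow> nat \<Rightarrow> int" where
  "dseq H 0 = 1"
| "dseq H (Suc n) = (if 1 / of_nat (Suc n) \<in> H then lcm (dseq H n) (int (Suc n)) else dseq H n)"

lemma dseq_pos: "dseq H n > 0"
  by (induction n) (auto simp: lcm_pos_int)

lemma dseq_dvd: "dseq H n dvd dseq H (Suc n)"
  by auto

lemma dseq_recip: assumes "subgrp H" "1 \<in> H" shows "1 / of_int (dseq H n) \<in> H"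
proof (induction n)
  case 0 then show ?case using assms by simp
next
  case (Suc n)
  show ?case
  proof (cases "1 / (of_nat (Suc n) :: rat) \<in> H")
    case True
    then have "1 / of_int (int (Suc n)) \<in> H" by simp
    from subgrp_lcm[OF assms(1) dseq_pos _ Suc this] True show ?thesis by simp
  qed (use Suc in simp)
qed

lemma dseq_covers: assumes "subgrp H" "1 \<in> H" "x \<in> H"
  shows "\<exists>n m. x = of_int m / of_int (dseq H n)"
proof -
  obtain p q where q: "quotient_of x = (p, q)" by (cases "quotient_of x") auto
  have qpos: "q > 0" using quotient_of_denom_pos[OF q] .
  have r: "1 / of_int q \<in> H" using subgrp_recip[OF assms q] .
  obtain n where n: "nat q = Suc n" using qpos by (metis gr0_implies_Suc zero_less_nat_eq)
  have qi: "int (Suc n) = q" using n qpos by linarith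
  have "1 / (of_nat (Suc n) :: rat) \<in> H" using r qi by (metis of_int_of_nat_eq)
  then have "q dvd dseq H (Suc n)" using qi by simp
  then obtain c where c: "dseq H (Suc n) = q * c" by blast
  have xe: "x = of_int p / of_int q" using quotient_of_div[OF q] .
  have cpos: "c > 0" using c dseq_pos[of H "Suc n"] qpos by (simp add: zero_less_mult_iff)
  have "x = of_int (p * c) / of_int (dseq H (Suc n))"
    using xe c qpos cpos by (simp add: field_simps)
  then show ?thesis by blast
qed


locale dlsetup =
  fixes Pos :: "'a::ab_group_add set" and v :: "'a \<Rightarrow> rat" and d :: "nat \<Rightarrow> int"
  assumes simple: "simple_po_group Pos"
  and v_add: "\<And>a b. v (a + b) = v a + v b" and v_inj: "inj v"
  and d_pos: "\<And>n. d n > 0" and d_dvd: "\<And>n. d n dvd d (Suc n)"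
  and d_in: "\<And>m n. \<exists>a. v a = of_int m / of_int (d n)"
  and d_cov: "\<And>a. \<exists>n m. v a = of_int m / of_int (d n)"
begin

definition val :: "nat \<times> int \<Rightarrow> rat" where
  "val p = of_int (snd p) / of_int (d (fst p))"
definition PP :: "nat \<Rightarrow> int set" where
  "PP n = {x. \<exists>a\<in>Pos. v a = of_int x / of_int (d n)}"
definition ff :: "nat \<Rightarrow> int \<Rightarrow> int" where
  "ff n x = (d (Suc n) div d n) * x"
definition phi :: "'a \<Rightarrow> (nat \<times> int) set" where
  "phi a = val -` {v a}"

lemma v0: "v 0 = 0" using v_add[of 0 0] by simp
lemma v_neg: "v (- a) = - v a" using v_add[of a "-a"] v0 by simp
lemma v_diff: "v (a - b) = v a - v b"
proof -
  have "v (a + - b) = v a + - v b" by (simp only: v_add v_neg)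
  then show ?thesis by (simp only: diff_conv_add_uminus)
qed
lemma v_nsmul: "v (nsmul n a) = of_nat n * v a"
  by (induction n) (simp_all add: nsmul_def v0 v_add distrib_right)
lemma v_eq: "v a = v b \<longleftrightarrow> a = b" using v_inj by (auto dest: injD)

lemma val_f: "val (Suc m, ff m y) = val (m, y)"
proof -
  obtain k where k: "d (Suc m) = d m * k" using d_dvd by blast
  have kpos: "k > 0" using k d_pos[of m] d_pos[of "Suc m"] by (simp add: zero_less_mult_iff)
  have "d (Suc m) div d m = k" using k d_pos[of m] by simp
  then show ?thesis using k kpos d_pos[of m] by (simp add: val_def ff_def)
qed

lemma val_trans: "val (n + k, trans_map ff n k x) = val (n, x)"
proof (induction k)
  case (Suc k)
  have "val (n + Suc k, trans_map ff n (Suc k) x) = val (Suc (n + k), ff (n + k) (trans_map ff n k x))"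
    by simp
  also have "\<dots> = val (n + k, trans_map ff n k x)" by (rule val_f)
  finally show ?case using Suc by simp
qed simp

lemma val_trans': "n \<le> k \<Longrightarrow> val (k, trans_map ff n (k - n) x) = val (n, x)"
  using val_trans[of n "k - n" x] by simp

lemma val_level: "val (k, x) = val (k, y) \<Longrightarrow> x = y"
  using d_pos[of k] by (simp add: val_def)

lemma val_add: "val (k, x + y) = val (k, x) + val (k, y)"
  by (simp add: val_def add_divide_distrib)

lemma rel_eq: "dl_rel ff = {(p, q). val p = val q}"
proof (intro set_eqI iffI)
  fix z assume "z \<in> dl_rel ff"
  then obtain n x m y k where z: "z = ((n, x), (m, y))" and nk: "n \<le> k" "m \<le> k"
    and e: "trans_map ff n (k - n) x = trans_map ff m (k - m) y"
    unfolding dl_rel_def by blast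
  have "val (n, x) = val (m, y)" using val_trans'[OF nk(1), of x] val_trans'[OF nk(2), of y] e by simp
  then show "z \<in> {(p, q). val p = val q}" using z by simp
next
  fix z assume "z \<in> {(p, q). val p = val q}"
  then obtain n x m y where z: "z = ((n, x), (m, y))" and e: "val (n, x) = val (m, y)" by auto
  let ?k = "max n m"
  have "val (?k, trans_map ff n (?k - n) x) = val (?k, trans_map ff m (?k - m) y)"
    using val_trans'[of n ?k x] val_trans'[of m ?k y] e by simp
  then have "trans_map ff n (?k - n) x = trans_map ff m (?k - m) y" by (rule val_level)
  then have "\<exists>k. n \<le> k \<and> m \<le> k \<and> trans_map ff n (k - n) x = trans_map ff m (k - m) y"
    by (intro exI[of _ ?k]) auto
  then show "z \<in> dl_rel ff" unfolding dl_rel_def z by simp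
qed

lemma val_surj: "\<exists>p. val p = v a"
proof -
  obtain n m where "v a = of_int m / of_int (d n)" using d_cov by blast
  then have "val (n, m) = v a" by (simp add: val_def)
  then show ?thesis by blast
qed
lemma val_range: "\<exists>a. v a = val p"
  using d_in[of "snd p" "fst p"] by (auto simp: val_def)

lemma img: "dl_rel ff `` {p} = val -` {val p}"
  by (auto simp: rel_eq)

lemma carrier: "dl_carrier ff = range phi"
proof -
  have "dl_carrier ff = (\<Union>p. {val -` {val p}})"
    unfolding dl_carrier_def quotient_def img by simp
  also have "\<dots> = range phi"
  proof (intro set_eqI iffI)
    fix A assume "A \<in> (\<Union>p. {val -` {val p}})"
    then obtain p where p: "A = val -` {val p}" by blast
    obtain a where "v a = val p" using val_range by blast
    then have "A = phi a" using p by (simp add: phi_def)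
    then show "A \<in> range phi" by blast
  next
    fix A assume "A \<in> range phi"
    then obtain a where a: "A = phi a" by blast
    obtain p where "val p = v a" using val_surj by blast
    then have "A = val -` {val p}" using a by (simp add: phi_def)
    then show "A \<in> (\<Union>p. {val -` {val p}})" by blast
  qed
  finally show ?thesis .
qed

lemma phi_inj: "inj phi"
proof (rule injI)
  fix a b assume "phi a = phi b"
  obtain p where p: "val p = v a" using val_surj by blast
  then have "p \<in> phi b" using \<open>phi a = phi b\<close> by (auto simp: phi_def)
  then have "v a = v b" using p by (simp add: phi_def)
  then show "a = b" by (simp add: v_eq)
qed

lemma phi_bij: "bij_betw phi UNIV (dl_carrier ff)"
  using phi_inj carrier by (simp add: bij_betw_def)

lemma phi_add: "phi (a + b) = dl_add ff (phi a) (phi b)"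
proof (intro set_eqI iffI)
  fix q assume q: "q \<in> phi (a + b)"
  obtain n x where nx: "val (n, x) = v a" using val_surj by (metis prod.exhaust)
  obtain m y where my: "val (m, y) = v b" using val_surj by (metis prod.exhaust)
  let ?k = "max n m"
  have "val (?k, trans_map ff n (?k - n) x + trans_map ff m (?k - m) y) = v a + v b"
    using val_add val_trans'[of n ?k x] val_trans'[of m ?k y] nx my by simp
  then have "q \<in> dl_rel ff `` {(?k, trans_map ff n (?k - n) x + trans_map ff m (?k - m) y)}"
    using q by (simp add: img phi_def v_add)
  moreover have "(n, x) \<in> phi a" "(m, y) \<in> phi b" using nx my by (auto simp: phi_def)
  moreover have "n \<le> ?k" "m \<le> ?k" by auto
  ultimately show "q \<in> dl_add ff (phi a) (phi b)" unfolding dl_add_def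
    by blast
next
  fix q assume "q \<in> dl_add ff (phi a) (phi b)"
  then obtain n x m y k where nx: "(n, x) \<in> phi a" and my: "(m, y) \<in> phi b" and nk: "n \<le> k" "m \<le> k"
    and q: "q \<in> dl_rel ff `` {(k, trans_map ff n (k - n) x + trans_map ff m (k - m) y)}"
    unfolding dl_add_def by blast
  have "val q = val (k, trans_map ff n (k - n) x + trans_map ff m (k - m) y)" using q by (simp add: img)
  also have "\<dots> = val (k, trans_map ff n (k - n) x) + val (k, trans_map ff m (k - m) y)"
    by (rule val_add)
  also have "\<dots> = v a + v b" using val_trans'[OF nk(1), of x] val_trans'[OF nk(2), of y] nx my
    by (simp add: phi_def)
  finally show "q \<in> phi (a + b)" by (simp add: phi_def v_add)
qed

lemma phi_pos: "phi ` Pos = dl_pos ff PP"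
proof (intro set_eqI iffI)
  fix A assume "A \<in> phi ` Pos"
  then obtain a where a: "a \<in> Pos" "A = phi a" by blast
  obtain n x where nx: "val (n, x) = v a" using val_surj by (metis prod.exhaust)
  have "x \<in> PP n" using a nx by (auto simp: PP_def val_def)
  moreover have "(n, x) \<in> A" using a nx by (simp add: phi_def)
  moreover have "A \<in> dl_carrier ff" using carrier a by simp
  ultimately show "A \<in> dl_pos ff PP" unfolding dl_pos_def by blast
next
  fix A assume "A \<in> dl_pos ff PP"
  then obtain n x where A: "A \<in> dl_carrier ff" "(n, x) \<in> A" "x \<in> PP n" unfolding dl_pos_def by blast
  obtain a where a: "a \<in> Pos" "v a = val (n, x)" using A(3) by (auto simp: PP_def val_def)
  obtain b where b: "A = phi b" using A(1) carrier by blast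
  have "v b = val (n, x)" using A(2) b by (simp add: phi_def)
  then have "b = a" using a v_eq by metis
  then show "A \<in> phi ` Pos" using a b by blast
qed

lemma PP_iff: "x \<in> PP n \<longleftrightarrow> (\<exists>a\<in>Pos. v a = val (n, x))"
  by (simp add: PP_def val_def)

lemma pog: "po_group Pos" using simple by (simp add: simple_po_group_def)

lemma simple_PP: "simple_component (PP n)"
proof -
  have P0: "0 \<in> Pos" and Padd: "\<And>x y. x \<in> Pos \<Longrightarrow> y \<in> Pos \<Longrightarrow> x + y \<in> Pos"
    and Pcap: "Pos \<inter> uminus ` Pos = {0}" using pog by (auto simp: po_group_def)
  have ou: "\<And>x. x \<in> Pos \<Longrightarrow> x \<noteq> 0 \<Longrightarrow> order_unit Pos x"
    using simple by (simp add: simple_po_group_def)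
  have "0 \<in> PP n" using P0 v0 by (auto simp: PP_iff val_def)
  moreover have "\<forall>x\<in>PP n. \<forall>y\<in>PP n. x + y \<in> PP n"
  proof (intro ballI)
    fix x y assume "x \<in> PP n" "y \<in> PP n"
    then obtain a b where "a \<in> Pos" "b \<in> Pos" "v a = val (n, x)" "v b = val (n, y)"
      by (auto simp: PP_iff)
    then show "x + y \<in> PP n" using Padd unfolding PP_iff by (metis val_add v_add)
  qed
  moreover have "PP n \<inter> uminus ` PP n = {0}"
  proof (intro set_eqI iffI)
    fix z :: int assume "z \<in> PP n \<inter> uminus ` PP n"
    then obtain y where "z \<in> PP n" "y \<in> PP n" "z = - y" by blast
    then obtain a b where ab: "a \<in> Pos" "b \<in> Pos" "v a = val (n, z)" "v b = val (n, y)"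
      by (auto simp: PP_iff)
    have "val (n, z) + val (n, y) = 0" using \<open>z = -y\<close> val_add[of n z y] by (simp add: val_def)
    then have "v (a + b) = v 0" using ab by (simp add: v_add v0)
    then have "a = - b" by (simp add: v_eq eq_neg_iff_add_eq_0)
    then have "a \<in> Pos \<inter> uminus ` Pos" using ab by blast
    then have "a = 0" using Pcap by blast
    then have "val (n, z) = 0" using ab v0 by simp
    then show "z \<in> {0}" using d_pos[of n] by (simp add: val_def)
  next
    fix z :: int assume "z \<in> {0}"
    then show "z \<in> PP n \<inter> uminus ` PP n" using \<open>0 \<in> PP n\<close> by force
  qed
  moreover have "\<forall>x\<in>PP n. x \<noteq> 0 \<longrightarrow> order_unit (PP n) x"
  proof (intro ballI impI)
    fix x assume x: "x \<in> PP n" "x \<noteq> 0"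
    then obtain a where a: "a \<in> Pos" "v a = val (n, x)" by (auto simp: PP_iff)
    have "a \<noteq> 0" using a x d_pos[of n] v0 by (auto simp: val_def)
    then have oa: "order_unit Pos a" using ou a by simp
    show "order_unit (PP n) x" unfolding order_unit_def
    proof (intro conjI allI)
      show "x \<noteq> 0" "x \<in> PP n" using x by auto
    next
      fix y
      obtain b where b: "v b = val (n, y)" using val_range by blast
      obtain N where N: "po_le Pos (- nsmul N a) b" "po_le Pos b (nsmul N a)"
        using oa unfolding order_unit_def by blast
      have nsi: "\<And>N. nsmul N x = int N * x" subgoal for N by (induction N) (simp_all add: nsmul_def distrib_right) done
      have "b + nsmul N a \<in> Pos" "nsmul N a - b \<in> Pos" using N by (simp_all add: po_le_def)
      moreover have "v (b + nsmul N a) = val (n, y + int N * x)"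
        using b a by (simp add: v_add v_nsmul val_def add_divide_distrib)
      moreover have "v (nsmul N a - b) = val (n, int N * x - y)"
        using b a by (simp add: v_diff v_nsmul val_def diff_divide_distrib)
      ultimately show "\<exists>N. po_le (PP n) (- nsmul N x) y \<and> po_le (PP n) y (nsmul N x)"
        unfolding po_le_def nsi PP_iff by (intro exI[of _ N]) auto
    qed
  qed
  moreover have "(UNIV::int set) \<noteq> {0}" by (metis UNIV_I singletonD zero_neq_one)
  ultimately show ?thesis
    by (simp add: simple_component_def simple_po_group_def po_group_def)
qed

lemma emb: "order_embedding (PP n) (PP (Suc n)) (ff n)"
proof -
  have vf: "\<And>x. val (Suc n, ff n x) = val (n, x)" by (rule val_f)
  have inj: "inj (ff n)"
  proof (rule injI)
    fix x y assume "ff n x = ff n y"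
    then have "val (n, x) = val (n, y)" using vf by metis
    then show "x = y" by (rule val_level)
  qed
  have fP: "\<And>x. ff n x \<in> PP (Suc n) \<longleftrightarrow> x \<in> PP n" by (simp add: PP_iff vf)
  have im: "ff n ` PP n = range (ff n) \<inter> PP (Suc n)"
    using fP by auto
  show ?thesis unfolding order_embedding_def group_hom_def
    using inj im by (auto simp: ff_def distrib_left)
qed

end

theorem proposition1p1:
  fixes Pos :: "'a::ab_group_add set"
  assumes "simple_po_group Pos"
    and "rank_one TYPE('a)"
  shows "\<exists>(P :: nat \<Rightarrow> int set) (f :: nat \<Rightarrow> int \<Rightarrow> int).
           (\<forall>n. simple_component (P n)) \<and>
           (\<forall>n. order_embedding (P n) (P (Suc n)) (f n)) \<and>
           order_iso_to_dl Pos P f"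
proof -
  obtain h :: "'a \<Rightarrow> rat" where hinj: "inj h" and hadd: "\<And>x y. h (x + y) = h x + h y"
    and nz: "(UNIV :: 'a set) \<noteq> {0}"
    using assms(2) unfolding rank_one_def by blast
  obtain e :: 'a where e: "e \<noteq> 0" using nz by blast
  have h0: "h 0 = 0" using hadd[of 0 0] by simp
  have he: "h e \<noteq> 0" using e hinj h0 by (metis injD)
  define v where "v a = h a / h e" for a
  have vadd: "\<And>a b. v (a + b) = v a + v b" by (simp add: v_def hadd add_divide_distrib)
  have vinj: "inj v" using hinj he by (auto simp: inj_def v_def)
  have v0: "v 0 = 0" by (simp add: v_def h0)
  have vneg: "v (- a) = - v a" for a using vadd[of a "-a"] v0 by simp
  define H where "H = range v"
  have sg: "subgrp H" unfolding subgrp_def H_def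
  proof (intro conjI ballI)
    show "0 \<in> range v" using v0 by (metis rangeI)
  next
    fix x y assume "x \<in> range v" "y \<in> range v"
    then obtain a b where "x = v a" "y = v b" by blast
    then have "x + y = v (a + b)" by (simp add: vadd)
    then show "x + y \<in> range v" by blast
  next
    fix x assume "x \<in> range v"
    then obtain a where "x = v a" by blast
    then have "- x = v (- a)" by (simp add: vneg)
    then show "- x \<in> range v" by blast
  qed
  have "v e = 1" using he by (simp add: v_def)
  then have one: "1 \<in> H" unfolding H_def by (metis rangeI)
  define d where "d = dseq H"
  interpret dlsetup Pos v d
  proof
    show "simple_po_group Pos" by (rule assms(1))
    show "v (a + b) = v a + v b" for a b by (rule vadd)
    show "inj v" by (rule vinj)
    show "d n > 0" for n by (simp add: d_def dseq_pos)
    show "d n dvd d (Suc n)" for n unfolding d_def by (rule dseq_dvd)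
    show "\<exists>a. v a = of_int m / of_int (d n)" for m n
    proof -
      have "of_int m * (1 / of_int (d n)) \<in> H"
        using subgrp_int_mult[OF sg dseq_recip[OF sg one]] by (simp add: d_def)
      then obtain a where "of_int m * (1 / of_int (d n)) = v a" unfolding H_def by blast
      then show ?thesis by (intro exI[of _ a]) simp
    qed
    show "\<exists>n m. v a = of_int m / of_int (d n)" for a
      using dseq_covers[OF sg one, of "v a"] by (simp add: H_def d_def)
  qed
  have "order_iso_to_dl Pos PP ff"
    unfolding order_iso_to_dl_def
  proof (intro exI[of _ phi] conjI allI)
    show "bij_betw phi UNIV (dl_carrier ff)" by (rule phi_bij)
    show "phi (a + b) = dl_add ff (phi a) (phi b)" for a b by (rule phi_add)
    show "phi ` Pos = dl_pos ff PP" by (rule phi_pos)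
  qed
  moreover have "\<forall>n. simple_component (PP n)" using simple_PP by blast
  moreover have "\<forall>n. order_embedding (PP n) (PP (Suc n)) (ff n)" using emb by blast
  ultimately show ?thesis by blast
qed

end
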